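(* Let $\eta>1$ and $\epsilon>0$. If a distribution $\mu$ over $\{-1,+1\}^n$ is $(\eta,\epsilon)$-completely spectrally independent, then for every $0<\alpha\le1/(2\eta)$ and every $x\in\left(0,(1+\epsilon)^{1/\alpha}\right]^n$ we have $F_{\mu,\alpha}(x)\le1$, where $$F_{\mu,\alpha}(z_1,\dots,z_n)=\frac{g_\mu(z_1^\alpha,\dots,z_n^\alpha)^{1/\alpha}}{\prod_{i=1}^n(\mu_i(+1)z_i+\mu_i(-1))}.$$
   Context: $g_\mu(z)=\sum_{\sigma\in\{-1,+1\}^n}\mu(\sigma)\prod_{i:\sigma_i=+1}z_i$; $\mu_i$ is the marginal at coordinate $i$. $(\boldsymbol\lambda*\mu)(\sigma)\propto\mu(\sigma)\prod_{i:\sigma_i=+1}\lambda_i$. $\mu$ is $(\eta,\epsilon)$-completely spectrally independent if $(\boldsymbol\lambda*\mu)$ is $\eta$-spectrally independent for every $\boldsymbol\lambda\in(0,1+\epsilon]^n$. A distribution $\nu$ is $\eta$-spectrally independent if for every $\Lambda\subseteq[n]$ and every $\sigma$ in the support of the marginal $\nu_\Lambda$, the spectral radius of the matrix $\Psi_{\nu^\sigma}(i,j)=\max_{x,y}d_{\mathrm{TV}}(\nu_j^{\sigma\wedge i\gets x},\nu_j^{\sigma\wedge i\gets y})$ (max over $x,y$ in the support of $\nu^\sigma_i$) is at most $\eta$; here $\nu^\sigma$ is $\nu$ conditioned on $\sigma$ and $\nu^{\sigma\wedge i\gets x}$ is further conditioned on coordinate $i$ equal to $x$. *)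

theory Defs
  imports Complex_Main "Jordan_Normal_Form.Spectral_Radius"
begin

text \<open>Coordinates are 0..n-1; a spin configuration sigma in {-1,+1}^n is encoded as
  a predicate sigma :: nat => bool (True = +1, False = -1) that is False outside {0..<n}.\<close>

definition cube :: "nat \<Rightarrow> (nat \<Rightarrow> bool) set" where
  "cube n = {\<sigma>. \<forall>i. n \<le> i \<longrightarrow> \<not> \<sigma> i}"

definition is_distr :: "nat \<Rightarrow> ((nat \<Rightarrow> bool) \<Rightarrow> real) \<Rightarrow> bool" where
  "is_distr n \<mu> \<longleftrightarrow> (\<forall>\<sigma>\<in>cube n. 0 \<le> \<mu> \<sigma>) \<and> (\<Sum>\<sigma>\<in>cube n. \<mu> \<sigma>) = 1"

definition gpoly :: "nat \<Rightarrow> ((nat \<Rightarrow> bool) \<Rightarrow> real) \<Rightarrow> (nat \<Rightarrow> real) \<Rightarrow> real" where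
  "gpoly n \<mu> z = (\<Sum>\<sigma>\<in>cube n. \<mu> \<sigma> * (\<Prod>i\<in>{i. i < n \<and> \<sigma> i}. z i))"

definition marg :: "nat \<Rightarrow> ((nat \<Rightarrow> bool) \<Rightarrow> real) \<Rightarrow> nat \<Rightarrow> bool \<Rightarrow> real" where
  "marg n \<mu> i b = (\<Sum>\<sigma>\<in>{\<sigma>\<in>cube n. \<sigma> i = b}. \<mu> \<sigma>)"

definition tilt :: "nat \<Rightarrow> (nat \<Rightarrow> real) \<Rightarrow> ((nat \<Rightarrow> bool) \<Rightarrow> real) \<Rightarrow> (nat \<Rightarrow> bool) \<Rightarrow> real" where
  "tilt n lam \<mu> \<sigma> = \<mu> \<sigma> * (\<Prod>i\<in>{i. i < n \<and> \<sigma> i}. lam i) /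
     (\<Sum>\<rho>\<in>cube n. \<mu> \<rho> * (\<Prod>i\<in>{i. i < n \<and> \<rho> i}. lam i))"

text \<open>A partial configuration (pinning) is given by a set Lam of coordinates and values tau on Lam.\<close>
definition agrees :: "nat set \<Rightarrow> (nat \<Rightarrow> bool) \<Rightarrow> (nat \<Rightarrow> bool) \<Rightarrow> bool" where
  "agrees Lam \<tau> \<sigma> \<longleftrightarrow> (\<forall>i\<in>Lam. \<sigma> i = \<tau> i)"

definition pinprob :: "nat \<Rightarrow> ((nat \<Rightarrow> bool) \<Rightarrow> real) \<Rightarrow> nat set \<Rightarrow> (nat \<Rightarrow> bool) \<Rightarrow> real" where
  "pinprob n \<nu> Lam \<tau> = (\<Sum>\<sigma>\<in>{\<sigma>\<in>cube n. agrees Lam \<tau> \<sigma>}. \<nu> \<sigma>)"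

definition cond :: "nat \<Rightarrow> ((nat \<Rightarrow> bool) \<Rightarrow> real) \<Rightarrow> nat set \<Rightarrow> (nat \<Rightarrow> bool) \<Rightarrow> (nat \<Rightarrow> bool) \<Rightarrow> real" where
  "cond n \<nu> Lam \<tau> \<sigma> = (if agrees Lam \<tau> \<sigma> then \<nu> \<sigma> / pinprob n \<nu> Lam \<tau> else 0)"

definition tv_marg :: "nat \<Rightarrow> ((nat \<Rightarrow> bool) \<Rightarrow> real) \<Rightarrow> ((nat \<Rightarrow> bool) \<Rightarrow> real) \<Rightarrow> nat \<Rightarrow> real" where
  "tv_marg n \<nu>1 \<nu>2 j = (\<bar>marg n \<nu>1 j True - marg n \<nu>2 j True\<bar>
                          + \<bar>marg n \<nu>1 j False - marg n \<nu>2 j False\<bar>) / 2"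

definition infl :: "nat \<Rightarrow> ((nat \<Rightarrow> bool) \<Rightarrow> real) \<Rightarrow> nat set \<Rightarrow> (nat \<Rightarrow> bool) \<Rightarrow> nat \<Rightarrow> nat \<Rightarrow> real" where
  "infl n \<nu> Lam \<tau> i j =
     (let S = {b. 0 < marg n (cond n \<nu> Lam \<tau>) i b} in
      Max {tv_marg n (cond n \<nu> (insert i Lam) (\<tau>(i := x)))
                     (cond n \<nu> (insert i Lam) (\<tau>(i := y))) j | x y. x \<in> S \<and> y \<in> S})"

definition infl_mat :: "nat \<Rightarrow> ((nat \<Rightarrow> bool) \<Rightarrow> real) \<Rightarrow> nat set \<Rightarrow> (nat \<Rightarrow> bool) \<Rightarrow> complex mat" where
  "infl_mat n \<nu> Lam \<tau> = mat n n (\<lambda>(i, j). complex_of_real (infl n \<nu> Lam \<tau> i j))"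

definition spec_indep :: "nat \<Rightarrow> real \<Rightarrow> ((nat \<Rightarrow> bool) \<Rightarrow> real) \<Rightarrow> bool" where
  "spec_indep n \<eta> \<nu> \<longleftrightarrow>
     (\<forall>Lam \<tau>. Lam \<subseteq> {..<n} \<and> 0 < pinprob n \<nu> Lam \<tau> \<longrightarrow>
        spectral_radius (infl_mat n \<nu> Lam \<tau>) \<le> \<eta>)"

definition complete_spec_indep :: "nat \<Rightarrow> real \<Rightarrow> real \<Rightarrow> ((nat \<Rightarrow> bool) \<Rightarrow> real) \<Rightarrow> bool" where
  "complete_spec_indep n \<eta> \<epsilon> \<mu> \<longleftrightarrow>
     (\<forall>lam. (\<forall>i<n. 0 < lam i \<and> lam i \<le> 1 + \<epsilon>) \<longrightarrow> spec_indep n \<eta> (tilt n lam \<mu>))"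

definition Ffun :: "nat \<Rightarrow> ((nat \<Rightarrow> bool) \<Rightarrow> real) \<Rightarrow> real \<Rightarrow> (nat \<Rightarrow> real) \<Rightarrow> real" where
  "Ffun n \<mu> \<alpha> z = gpoly n \<mu> (\<lambda>i. z i powr \<alpha>) powr (1 / \<alpha>) /
      (\<Prod>i<n. marg n \<mu> i True * z i + marg n \<mu> i False)"

end

theory Submission
  imports Defs
begin

fun mpow :: "nat \<Rightarrow> (nat \<Rightarrow> nat \<Rightarrow> real) \<Rightarrow> nat \<Rightarrow> nat \<Rightarrow> nat \<Rightarrow> real" where
  "mpow n B 0 i j = (if i = j then 1 else 0)"
| "mpow n B (Suc k) i j = (\<Sum>l<n. mpow n B k i l * B l j)"

lemma jnf_pow:
  assumes "i < n" "j < n"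
  shows "(mat n n (\<lambda>(i,j). complex_of_real (B i j)) ^\<^sub>m k) $$ (i,j) = complex_of_real (mpow n B k i j)"
  using assms
proof (induction k arbitrary: i j)
  case 0
  then show ?case by simp
next
  case (Suc k)
  have "(mat n n (\<lambda>(i,j). complex_of_real (B i j)) ^\<^sub>m Suc k) $$ (i,j)
     = (\<Sum>l\<in>{0..<n}. (mat n n (\<lambda>(i,j). complex_of_real (B i j)) ^\<^sub>m k) $$ (i,l) * complex_of_real (B l j))"
    using Suc.prems by (simp add: scalar_prod_def)
  also have "\<dots> = (\<Sum>l\<in>{0..<n}. complex_of_real (mpow n B k i l) * complex_of_real (B l j))"
    using Suc by (intro sum.cong) auto
  also have "\<dots> = complex_of_real (mpow n B (Suc k) i j)"
    by (simp add: atLeast0LessThan)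
  finally show ?case .
qed

lemma mpow_scale: "mpow n (\<lambda>i j. B i j / c) k i j = mpow n B k i j / c ^ k"
proof (induction k arbitrary: i j)
  case (Suc k)
  then show ?case by (simp add: sum_divide_distrib mult.commute)
qed simp

lemma spectral_radius_scale:
  fixes B :: "nat \<Rightarrow> nat \<Rightarrow> real"
  assumes "0 < n" "0 < c"
  shows "spectral_radius (mat n n (\<lambda>(i,j). complex_of_real (B i j / c)))
       \<le> spectral_radius (mat n n (\<lambda>(i,j). complex_of_real (B i j))) / c"
proof -
  let ?A = "mat n n (\<lambda>(i,j). complex_of_real (B i j))"
  let ?A' = "mat n n (\<lambda>(i,j). complex_of_real (B i j / c))"
  have A: "?A \<in> carrier_mat n n" and A': "?A' \<in> carrier_mat n n" by auto
  obtain ev where ev: "ev \<in> spectrum ?A'" and r: "spectral_radius ?A' = norm ev"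
    using spectral_radius_mem_max(1)[OF A' assms(1)] by auto
  from ev obtain v where v: "eigenvector ?A' v ev" unfolding spectrum_def eigenvalue_def by auto
  have vc: "v \<in> carrier_vec n" and vn: "v \<noteq> 0\<^sub>v n" and eq: "?A' *\<^sub>v v = ev \<cdot>\<^sub>v v"
    using v unfolding eigenvector_def by auto
  have "?A *\<^sub>v v = (complex_of_real c * ev) \<cdot>\<^sub>v v"
  proof (rule eq_vecI)
    fix i assume i: "i < dim_vec ((complex_of_real c * ev) \<cdot>\<^sub>v v)"
    hence i: "i < n" using vc by auto
    have "(?A *\<^sub>v v) $ i = complex_of_real c * ((?A' *\<^sub>v v) $ i)"
      using i vc assms(2) by (simp add: scalar_prod_def sum_distrib_left algebra_simps)
    also have "\<dots> = ((complex_of_real c * ev) \<cdot>\<^sub>v v) $ i" using eq i vc by simp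
    finally show "(?A *\<^sub>v v) $ i = ((complex_of_real c * ev) \<cdot>\<^sub>v v) $ i" .
  qed (use vc in auto)
  hence "eigenvector ?A v (complex_of_real c * ev)" using vc vn unfolding eigenvector_def by auto
  hence "complex_of_real c * ev \<in> spectrum ?A" unfolding spectrum_def eigenvalue_def by auto
  hence "norm (complex_of_real c * ev) \<le> spectral_radius ?A"
    using spectral_radius_mem_max(2)[OF A assms(1)] by auto
  hence "c * norm ev \<le> spectral_radius ?A" using assms(2) by (simp add: norm_mult)
  thus ?thesis using r assms(2) by (simp add: field_simps)
qed

lemma mpow_bound:
  fixes B :: "nat \<Rightarrow> nat \<Rightarrow> real"
  assumes "spectral_radius (mat n n (\<lambda>(i,j). complex_of_real (B i j))) \<le> \<eta>" "0 < \<eta>"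
  shows "\<exists>c1 c2. \<forall>k i j. i < n \<longrightarrow> j < n \<longrightarrow> \<bar>mpow n B k i j\<bar> \<le> \<eta> ^ k * (c1 + c2 * real k ^ (n - 1))"
proof (cases "n = 0")
  case True then show ?thesis by auto
next
  case False
  let ?A' = "mat n n (\<lambda>(i,j). complex_of_real (B i j / \<eta>))"
  have "spectral_radius ?A' \<le> spectral_radius (mat n n (\<lambda>(i,j). complex_of_real (B i j))) / \<eta>"
    using spectral_radius_scale[of n \<eta> B] False assms by simp
  also have "\<dots> \<le> 1" using assms by simp
  finally have "spectral_radius ?A' \<le> 1" .
  from spectral_radius_jnf_norm_bound_le_1_upper_triangular[OF _ this, of n]
  obtain c1 c2 where b: "\<And>k. norm_bound (?A' ^\<^sub>m k) (c1 + c2 * real k ^ (n - 1))" by auto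
  show ?thesis
  proof (intro exI allI impI)
    fix k i j assume ij: "i < n" "j < n"
    have "norm ((?A' ^\<^sub>m k) $$ (i,j)) \<le> c1 + c2 * real k ^ (n - 1)"
      using b[of k] ij unfolding norm_bound_def by auto
    hence "norm (complex_of_real (mpow n B k i j / \<eta> ^ k)) \<le> c1 + c2 * real k ^ (n - 1)"
      using jnf_pow[OF ij, of "\<lambda>i j. B i j / \<eta>" k] mpow_scale[of n B \<eta> k i j]
      by (simp del: of_real_divide of_real_power)
    hence "\<bar>mpow n B k i j / \<eta> ^ k\<bar> \<le> c1 + c2 * real k ^ (n - 1)"
      by (simp only: norm_of_real)
    thus "\<bar>mpow n B k i j\<bar> \<le> \<eta> ^ k * (c1 + c2 * real k ^ (n - 1))"
      using assms(2) by (simp add: abs_divide field_simps)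
  qed
qed

lemma growth:
  fixes q a A C :: real
  assumes q: "1 < q" and a: "0 < a"
  shows "\<exists>k. A + C * real (2^k) ^ e < a * q ^ (2^k)"
proof -
  define h where "h k = real (2^k) * ln q" for k :: nat
  have lq: "0 < ln q" using q by simp
  have f2: "filterlim (\<lambda>k::nat. real (2^k)) at_top sequentially"
  proof -
    have "filterlim (\<lambda>k::nat. (2::nat)^k) at_top sequentially"
      by (rule filterlim_subseq) (simp add: strict_mono_def)
    thus ?thesis by (rule filterlim_compose[OF filterlim_real_sequentially])
  qed
  have fh: "filterlim h at_top sequentially"
    unfolding h_def by (rule filterlim_at_top_mult_tendsto_pos[OF tendsto_const lq f2])
  have eq: "exp (h k) = q ^ (2^k)" for k
    using q unfolding h_def by (subst exp_of_nat_mult) simp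
  have t1: "(\<lambda>k. h k ^ e / exp (h k)) \<longlonglongrightarrow> 0" for e
    by (rule filterlim_compose[OF tendsto_power_div_exp_0 fh])
  have t2: "(\<lambda>k. real (2^k) ^ e / q ^ (2^k)) \<longlonglongrightarrow> 0" for e
  proof -
    have "(\<lambda>k. (h k ^ e / exp (h k)) / ln q ^ e) \<longlonglongrightarrow> 0 / ln q ^ e"
      by (intro tendsto_divide t1 tendsto_const) (use lq in simp)
    moreover have "(h k ^ e / exp (h k)) / ln q ^ e = real (2^k) ^ e / q ^ (2^k)" for k
      using lq by (subst eq) (simp add: h_def power_mult_distrib)
    ultimately show ?thesis by simp
  qed
  have t3: "(\<lambda>k. 1 / q ^ (2^k)) \<longlonglongrightarrow> 0"
  proof -
    have "(\<lambda>k. real (2^k) ^ 0 / q ^ (2^k)) \<longlonglongrightarrow> 0" using t2[of 0] .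
    thus ?thesis by simp
  qed
  have "(\<lambda>k. A * (1 / q ^ (2^k)) + C * (real (2^k) ^ e / q ^ (2^k))) \<longlonglongrightarrow> A * 0 + C * 0"
    by (intro tendsto_intros t2 t3)
  hence "eventually (\<lambda>k. A * (1 / q ^ (2^k)) + C * (real (2^k) ^ e / q ^ (2^k)) < a) sequentially"
    using a by (intro order_tendstoD) auto
  then obtain k where k: "A * (1 / q ^ (2^k)) + C * (real (2^k) ^ e / q ^ (2^k)) < a"
    by (auto simp: eventually_sequentially)
  have qp: "0 < q ^ (2^k)" using q by simp
  have "(A + C * real (2^k) ^ e) / q ^ (2^k) < a" using k by (simp add: add_divide_distrib)
  hence "A + C * real (2^k) ^ e < a * q ^ (2^k)" using qp by (simp add: divide_less_eq)
  thus ?thesis by blast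
qed

lemma mpow_nonneg:
  assumes "\<And>i j. i < n \<Longrightarrow> j < n \<Longrightarrow> 0 \<le> B i j" "j < n"
  shows "0 \<le> mpow n B k i j"
  using assms(2)
proof (induction k arbitrary: i j)
  case (Suc k)
  then show ?case using assms(1) by (auto intro!: sum_nonneg mult_nonneg_nonneg)
qed simp

lemma power_method:
  fixes V d :: "nat \<Rightarrow> real" and M B :: "nat \<Rightarrow> nat \<Rightarrow> real"
  assumes V: "\<And>i. i < n \<Longrightarrow> 0 \<le> V i"
    and sym: "\<And>i j. i < n \<Longrightarrow> j < n \<Longrightarrow> V i * M i j = V j * M j i"
    and dom: "\<And>i j. i < n \<Longrightarrow> j < n \<Longrightarrow> \<bar>M i j\<bar> \<le> B i j"
    and bnd: "\<And>k i j. i < n \<Longrightarrow> j < n \<Longrightarrow> \<bar>mpow n B k i j\<bar> \<le> \<eta> ^ k * (c1 + c2 * real k ^ e)"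
    and eta: "0 < \<eta>"
  shows "(\<Sum>i<n. V i * d i * (\<Sum>j<n. M i j * d j)) \<le> \<eta> * (\<Sum>i<n. V i * d i ^ 2)"
proof -
  define Mop where "Mop v = (\<lambda>i. \<Sum>j<n. M i j * v j)" for v :: "nat \<Rightarrow> real"
  define ip where "ip u v = (\<Sum>i<n. V i * u i * v i)" for u v :: "nat \<Rightarrow> real"
  have ip_sym: "ip u v = ip v u" for u v unfolding ip_def by (simp add: ac_simps)
  have adj: "ip u (Mop v) = ip (Mop u) v" for u v
  proof -
    have "ip u (Mop v) = (\<Sum>i<n. \<Sum>j<n. V i * M i j * u i * v j)"
      unfolding ip_def Mop_def by (simp add: sum_distrib_left ac_simps)
    also have "\<dots> = (\<Sum>i<n. \<Sum>j<n. V j * M j i * u i * v j)"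
      by (intro sum.cong refl) (simp add: sym)
    also have "\<dots> = (\<Sum>j<n. \<Sum>i<n. V j * M j i * u i * v j)"
      by (rule sum.swap)
    also have "\<dots> = ip (Mop u) v"
      unfolding ip_def Mop_def by (simp add: sum_distrib_left sum_distrib_right ac_simps)
    finally show ?thesis .
  qed
  have adjk: "ip u ((Mop ^^ k) v) = ip ((Mop ^^ k) u) v" for k u v
  proof (induction k arbitrary: u v)
    case (Suc k)
    have "ip u ((Mop ^^ Suc k) v) = ip (Mop u) ((Mop ^^ k) v)" by (simp add: adj)
    also have "\<dots> = ip ((Mop ^^ k) (Mop u)) v" by (rule Suc)
    also have "\<dots> = ip ((Mop ^^ Suc k) u) v" by (simp add: funpow_Suc_right del: funpow.simps)
    finally show ?case .
  qed simp
  define a where "a k = ip d ((Mop ^^ k) d)" for k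
  have sq: "a (m + m) = ip ((Mop ^^ m) d) ((Mop ^^ m) d)" for m
    unfolding a_def funpow_add o_def by (rule adjk)
  have ipnn: "0 \<le> ip u u" for u unfolding ip_def using V by (auto intro!: sum_nonneg simp: mult.assoc)
  have expand: "ip (\<lambda>i. x i - t * y i) (\<lambda>i. x i - t * y i) = ip x x - 2 * t * ip x y + t^2 * ip y y" for x y t
    unfolding ip_def by (simp add: sum_subtractf sum.distrib sum_distrib_left power2_eq_square algebra_simps)
  have dbl: "a m ^ 2 \<le> a 0 * a (m + m)" if a0: "0 < a 0" for m
  proof -
    define x where "x = (Mop ^^ m) d"
    define t where "t = a m / a 0"
    have "0 \<le> ip (\<lambda>i. x i - t * d i) (\<lambda>i. x i - t * d i)" by (rule ipnn)
    also have "\<dots> = a (m+m) - 2 * t * a m + t^2 * a 0"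
    proof -
      have "ip x x = a (m+m)" unfolding x_def by (simp add: sq)
      moreover have "ip x d = a m" unfolding x_def a_def by (simp add: ip_sym)
      moreover have "ip d d = a 0" unfolding a_def by simp
      ultimately show ?thesis unfolding expand by simp
    qed
    finally have "0 \<le> a (m+m) - 2 * t * a m + t^2 * a 0" .
    hence "0 \<le> a (m+m) - a m ^ 2 / a 0" using a0 unfolding t_def by (simp add: power2_eq_square field_simps)
    thus ?thesis using a0 by (simp add: field_simps)
  qed
  have Bnn: "0 \<le> B i j" if "i < n" "j < n" for i j using dom[OF that] by linarith
  have opb: "\<bar>(Mop ^^ k) v i\<bar> \<le> (\<Sum>j<n. mpow n B k i j * \<bar>v j\<bar>)" if "i < n" for k v i
    using that
  proof (induction k arbitrary: v i)
    case 0
    have "(\<Sum>j<n. mpow n B 0 i j * \<bar>v j\<bar>) = (\<Sum>j<n. if i = j then \<bar>v j\<bar> else 0)"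
      by (rule sum.cong) auto
    then show ?case using 0 by simp
  next
    case (Suc k)
    have "\<bar>(Mop ^^ Suc k) v i\<bar> = \<bar>(Mop ^^ k) (Mop v) i\<bar>"
      by (simp add: funpow_Suc_right del: funpow.simps)
    also have "\<dots> \<le> (\<Sum>j<n. mpow n B k i j * \<bar>Mop v j\<bar>)" using Suc by blast
    also have "\<dots> \<le> (\<Sum>j<n. mpow n B k i j * (\<Sum>l<n. B j l * \<bar>v l\<bar>))"
    proof (intro sum_mono mult_left_mono)
      fix j assume j: "j \<in> {..<n}"
      have "\<bar>Mop v j\<bar> \<le> (\<Sum>l<n. \<bar>M j l * v l\<bar>)" unfolding Mop_def by (rule sum_abs)
      also have "\<dots> \<le> (\<Sum>l<n. B j l * \<bar>v l\<bar>)"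
        using j by (intro sum_mono) (auto simp: abs_mult intro!: mult_right_mono dom)
      finally show "\<bar>Mop v j\<bar> \<le> (\<Sum>l<n. B j l * \<bar>v l\<bar>)" .
      show "0 \<le> mpow n B k i j" using j by (intro mpow_nonneg[OF Bnn]) auto
    qed
    also have "\<dots> = (\<Sum>j<n. \<Sum>l<n. mpow n B k i j * B j l * \<bar>v l\<bar>)"
      by (simp add: sum_distrib_left ac_simps)
    also have "\<dots> = (\<Sum>l<n. \<Sum>j<n. mpow n B k i j * B j l * \<bar>v l\<bar>)" by (rule sum.swap)
    also have "\<dots> = (\<Sum>l<n. mpow n B (Suc k) i l * \<bar>v l\<bar>)"
      by (simp add: sum_distrib_right)
    finally show ?case .
  qed
  define D1 where "D1 = (\<Sum>j<n. \<bar>d j\<bar>)"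
  define D2 where "D2 = (\<Sum>i<n. V i * \<bar>d i\<bar>)"
  have aub: "a k \<le> \<eta> ^ k * (c1 + c2 * real k ^ e) * (D2 * D1)" for k
  proof -
    have "a k \<le> (\<Sum>i<n. V i * \<bar>d i\<bar> * \<bar>(Mop ^^ k) d i\<bar>)"
      unfolding a_def ip_def
    proof (intro sum_mono)
      fix i assume i: "i \<in> {..<n}"
      have "d i * (Mop ^^ k) d i \<le> \<bar>d i * (Mop ^^ k) d i\<bar>" by (rule abs_ge_self)
      hence "V i * (d i * (Mop ^^ k) d i) \<le> V i * \<bar>d i * (Mop ^^ k) d i\<bar>"
        using V i by (intro mult_left_mono) auto
      thus "V i * d i * (Mop ^^ k) d i \<le> V i * \<bar>d i\<bar> * \<bar>(Mop ^^ k) d i\<bar>"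
        by (simp add: abs_mult mult.assoc)
    qed
    also have "\<dots> \<le> (\<Sum>i<n. V i * \<bar>d i\<bar> * (\<eta> ^ k * (c1 + c2 * real k ^ e) * D1))"
    proof (intro sum_mono mult_left_mono)
      fix i assume i: "i \<in> {..<n}"
      have "\<bar>(Mop ^^ k) d i\<bar> \<le> (\<Sum>j<n. mpow n B k i j * \<bar>d j\<bar>)" using i opb by auto
      also have "\<dots> \<le> (\<Sum>j<n. \<eta> ^ k * (c1 + c2 * real k ^ e) * \<bar>d j\<bar>)"
      proof (intro sum_mono mult_right_mono)
        fix j assume j: "j \<in> {..<n}"
        have "mpow n B k i j \<le> \<bar>mpow n B k i j\<bar>" by (rule abs_ge_self)
        also have "\<dots> \<le> \<eta> ^ k * (c1 + c2 * real k ^ e)" using i j bnd by auto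
        finally show "mpow n B k i j \<le> \<eta> ^ k * (c1 + c2 * real k ^ e)" .
      qed simp
      also have "\<dots> = \<eta> ^ k * (c1 + c2 * real k ^ e) * D1" unfolding D1_def by (simp add: sum_distrib_left)
      finally show "\<bar>(Mop ^^ k) d i\<bar> \<le> \<eta> ^ k * (c1 + c2 * real k ^ e) * D1" .
      show "0 \<le> V i * \<bar>d i\<bar>" using V i by auto
    qed
    also have "\<dots> = \<eta> ^ k * (c1 + c2 * real k ^ e) * (D2 * D1)"
      unfolding D2_def sum_distrib_right[symmetric] by (simp add: ac_simps)
    finally show ?thesis .
  qed
  have a1: "a 1 = (\<Sum>i<n. V i * d i * (\<Sum>j<n. M i j * d j))" unfolding a_def ip_def Mop_def by simp
  have a0: "a 0 = (\<Sum>i<n. V i * d i ^ 2)" unfolding a_def ip_def by (simp add: power2_eq_square ac_simps)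
  show ?thesis
  proof (rule ccontr)
    assume "\<not> ?thesis"
    hence gt: "\<eta> * a 0 < a 1" using a0 a1 by simp
    have a0nn: "0 \<le> a 0" unfolding a_def by (simp add: ipnn)
    show False
    proof (cases "a 0 = 0")
      case True
      have "V i * d i = 0" if "i < n" for i
      proof -
        have "(\<Sum>i<n. V i * d i ^ 2) = 0" using True a0 by simp
        hence "V i * d i ^ 2 = 0" using that V by (subst (asm) sum_nonneg_eq_0_iff) auto
        thus ?thesis by simp
      qed
      hence "a 1 = 0" unfolding a1 by (intro sum.neutral) auto
      thus False using gt True by simp
    next
      case False
      hence pos: "0 < a 0" using a0nn by simp
      define r where "r = a 1 / a 0"
      have r: "\<eta> < r" using gt pos unfolding r_def by (simp add: field_simps)
      have low: "a 0 * r ^ (2^k) \<le> a (2^k)" for k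
      proof (induction k)
        case 0 then show ?case using pos by (simp add: r_def)
      next
        case (Suc k)
        have nn: "0 \<le> a 0 * r ^ (2^k)" using pos r eta by simp
        have "(a 0 * r ^ (2^k))^2 \<le> a (2^k) ^ 2" using Suc nn by (intro power_mono) auto
        also have "\<dots> \<le> a 0 * a (2^k + 2^k)" by (rule dbl[OF pos])
        finally have "a 0 * (a 0 * r ^ (2^Suc k)) \<le> a 0 * a (2^Suc k)"
          by (simp add: power2_eq_square power_add mult_2 ac_simps)
        thus ?case using pos by simp
      qed
      define q where "q = r / \<eta>"
      have q: "1 < q" using r eta unfolding q_def by simp
      obtain k where k: "c1 * (D2 * D1) + c2 * (D2 * D1) * real (2^k) ^ e < a 0 * q ^ (2^k)"
        using growth[OF q pos] by blast
      have "a 0 * r ^ (2^k) \<le> \<eta> ^ (2^k) * (c1 + c2 * real (2^k) ^ e) * (D2 * D1)"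
        using low[of k] aub[of "2^k"] by simp
      hence "a 0 * q ^ (2^k) \<le> (c1 + c2 * real (2^k) ^ e) * (D2 * D1)"
        using eta unfolding q_def by (simp add: power_divide field_simps)
      thus False using k by (simp add: algebra_simps)
    qed
  qed
qed

lemma finite_cube: "finite (cube n)"
proof -
  have "cube n \<subseteq> (\<lambda>S i. i \<in> S) ` Pow {..<n}"
  proof
    fix \<sigma> assume s: "\<sigma> \<in> cube n"
    have "\<sigma> = (\<lambda>i. i \<in> {i. i < n \<and> \<sigma> i})" using s unfolding cube_def by (auto simp: not_le[symmetric])
    thus "\<sigma> \<in> (\<lambda>S i. i \<in> S) ` Pow {..<n}" by blast
  qed
  thus ?thesis by (rule finite_subset) auto
qed

definition ind :: "(nat \<Rightarrow> bool) \<Rightarrow> nat \<Rightarrow> real" where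
  "ind \<sigma> i = (if \<sigma> i then 1 else 0)"

lemma marg_sum: "marg n f j b = (\<Sum>\<sigma>\<in>cube n. if \<sigma> j = b then f \<sigma> else 0)"
  unfolding marg_def by (simp add: sum.inter_filter finite_cube)

lemma marg_TF: "marg n f j True + marg n f j False = (\<Sum>\<sigma>\<in>cube n. f \<sigma>)"
  unfolding marg_sum by (simp add: sum.distrib[symmetric] if_distrib cong: if_cong) (rule sum.cong, auto)

lemma Max_pair_ge:
  fixes S :: "bool set" and f :: "bool \<Rightarrow> bool \<Rightarrow> real"
  assumes "x \<in> S" "y \<in> S"
  shows "f x y \<le> Max {f x y | x y. x \<in> S \<and> y \<in> S}"
proof (rule Max_ge)
  have "{f x y | x y. x \<in> S \<and> y \<in> S} \<subseteq> (\<lambda>(x,y). f x y) ` UNIV" by auto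
  thus "finite {f x y | x y. x \<in> S \<and> y \<in> S}" by (rule finite_subset) auto
  show "f x y \<in> {f x y | x y. x \<in> S \<and> y \<in> S}" using assms by auto
qed

lemma cond_empty:
  assumes "(\<Sum>\<sigma>\<in>cube n. \<nu> \<sigma>) = 1"
  shows "cond n \<nu> {} \<tau> = \<nu>"
  using assms by (simp add: cond_def agrees_def pinprob_def fun_eq_iff)

lemma cond_single:
  "cond n \<nu> (insert i {}) (\<tau>(i := b)) = (\<lambda>\<sigma>. if \<sigma> i = b then \<nu> \<sigma> / marg n \<nu> i b else 0)"
  by (simp add: cond_def agrees_def pinprob_def marg_def fun_eq_iff)

lemma tv_self: "tv_marg n f f j = 0" by (simp add: tv_marg_def)

lemma variance_bound:
  fixes \<nu> :: "(nat \<Rightarrow> bool) \<Rightarrow> real" and d :: "nat \<Rightarrow> real"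
  assumes nn: "\<And>\<sigma>. \<sigma> \<in> cube n \<Longrightarrow> 0 \<le> \<nu> \<sigma>" and s1: "(\<Sum>\<sigma>\<in>cube n. \<nu> \<sigma>) = 1"
    and si: "spec_indep n \<eta> \<nu>" and eta: "0 < \<eta>"
  shows "(\<Sum>\<sigma>\<in>cube n. \<nu> \<sigma> * (\<Sum>i<n. ind \<sigma> i * d i)^2) - (\<Sum>\<sigma>\<in>cube n. \<nu> \<sigma> * (\<Sum>i<n. ind \<sigma> i * d i))^2
     \<le> \<eta> * (\<Sum>i<n. (\<Sum>\<sigma>\<in>cube n. \<nu> \<sigma> * ind \<sigma> i) * (1 - (\<Sum>\<sigma>\<in>cube n. \<nu> \<sigma> * ind \<sigma> i)) * d i ^ 2)"
proof -
  define m where "m i = (\<Sum>\<sigma>\<in>cube n. \<nu> \<sigma> * ind \<sigma> i)" for i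
  define P where "P i j = (\<Sum>\<sigma>\<in>cube n. \<nu> \<sigma> * ind \<sigma> i * ind \<sigma> j)" for i j
  define C where "C i j = P i j - m i * m j" for i j
  define V where "V i = m i * (1 - m i)" for i
  define M where "M i j = (if 0 < m i \<and> m i < 1 then C i j / V i else 0)" for i j
  define \<tau>0 where "\<tau>0 = (\<lambda>_::nat. False)"
  define B where "B i j = infl n \<nu> {} \<tau>0 i j" for i j
  have ind01: "0 \<le> ind \<sigma> i" "ind \<sigma> i \<le> 1" for \<sigma> i by (auto simp: ind_def)
  have mT: "marg n \<nu> i True = m i" for i
    unfolding marg_sum m_def by (rule sum.cong) (auto simp: ind_def)
  have mF: "marg n \<nu> i False = 1 - m i" for i
    using marg_TF[of n \<nu> i] s1 mT[of i] by simp
  have m0: "0 \<le> m i" for i unfolding m_def using nn ind01 by (auto intro!: sum_nonneg)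
  have P_le: "P i j \<le> m i" for i j
    unfolding P_def m_def by (intro sum_mono) (use nn in \<open>auto simp: ind_def\<close>)
  have P0: "0 \<le> P i j" for i j unfolding P_def using nn ind01 by (auto intro!: sum_nonneg)
  have mP: "m j - P i j = (\<Sum>\<sigma>\<in>cube n. \<nu> \<sigma> * ind \<sigma> j * (1 - ind \<sigma> i))" for i j
    unfolding m_def P_def by (simp add: sum_subtractf[symmetric] algebra_simps)
  have mP0: "0 \<le> m j - P i j" for i j unfolding mP using nn ind01 by (auto intro!: sum_nonneg)
  have mP1: "m j - P i j \<le> 1 - m i" for i j
  proof -
    have "m j - P i j \<le> (\<Sum>\<sigma>\<in>cube n. \<nu> \<sigma> * (1 - ind \<sigma> i))"
      unfolding mP by (intro sum_mono) (use nn in \<open>auto simp: ind_def\<close>)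
    also have "\<dots> = 1 - m i" unfolding m_def using s1 by (simp add: algebra_simps sum_subtractf)
    finally show ?thesis .
  qed
  have m1: "m i \<le> 1" for i using mP0[of i i] mP1[of i i] P0[of i i] by linarith
  have CVM: "C i j = V i * M i j" for i j
  proof (cases "0 < m i \<and> m i < 1")
    case True
    then show ?thesis unfolding M_def V_def by simp
  next
    case False
    hence "m i = 0 \<or> m i = 1" using m0[of i] m1[of i] by linarith
    thus ?thesis
    proof
      assume h: "m i = 0"
      hence "P i j = 0" using P0[of i j] P_le[of i j] by linarith
      thus ?thesis unfolding C_def M_def V_def using h by simp
    next
      assume h: "m i = 1"
      hence "P i j = m j" using mP0[of j i] mP1[of j i] by linarith
      thus ?thesis unfolding C_def M_def V_def using h by simp
    qed
  qed
  have Csym: "C i j = C j i" for i j unfolding C_def P_def by (simp add: ac_simps)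
  have condT: "\<And>b. (\<Sum>\<sigma>\<in>cube n. cond n \<nu> (insert i {}) (\<tau>0(i := b)) \<sigma>) = 1" if "0 < marg n \<nu> i b'" "0 < marg n \<nu> i (\<not> b')" for i b'
  proof -
    fix b
    have pos: "0 < marg n \<nu> i b" using that by (cases "b = b'") auto
    have "(\<Sum>\<sigma>\<in>cube n. cond n \<nu> (insert i {}) (\<tau>0(i := b)) \<sigma>)
        = (\<Sum>\<sigma>\<in>cube n. (if \<sigma> i = b then \<nu> \<sigma> else 0) / marg n \<nu> i b)"
      unfolding cond_single by (rule sum.cong) auto
    also have "\<dots> = marg n \<nu> i b / marg n \<nu> i b"
      by (simp only: sum_divide_distrib[symmetric] marg_sum[symmetric])
    finally show "(\<Sum>\<sigma>\<in>cube n. cond n \<nu> (insert i {}) (\<tau>0(i := b)) \<sigma>) = 1" using pos by simp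
  qed
  have dom: "\<bar>M i j\<bar> \<le> B i j" if ij: "i < n" "j < n" for i j
  proof -
    have B_eq: "B i j = Max {tv_marg n (cond n \<nu> (insert i {}) (\<tau>0(i := x))) (cond n \<nu> (insert i {}) (\<tau>0(i := y))) j | x y.
         x \<in> {b. 0 < marg n \<nu> i b} \<and> y \<in> {b. 0 < marg n \<nu> i b}}"
      unfolding B_def infl_def Let_def cond_empty[OF s1] ..
    show ?thesis
    proof (cases "0 < m i \<and> m i < 1")
      case True
      have inS: "True \<in> {b. 0 < marg n \<nu> i b}" "False \<in> {b. 0 < marg n \<nu> i b}"
        using True mT mF by auto
      let ?cT = "cond n \<nu> (insert i {}) (\<tau>0(i := True))"
      let ?cF = "cond n \<nu> (insert i {}) (\<tau>0(i := False))"
      have aT: "marg n ?cT j True = P i j / m i"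
        unfolding cond_single unfolding mT unfolding marg_sum P_def
        by (simp add: sum_divide_distrib if_distrib cong: if_cong) (rule sum.cong, auto simp: ind_def)
      have aF: "marg n ?cF j True = (m j - P i j) / (1 - m i)"
        unfolding cond_single unfolding mF unfolding marg_sum mP
        by (simp add: sum_divide_distrib if_distrib cong: if_cong) (rule sum.cong, auto simp: ind_def)
      have sT: "marg n ?cT j False = 1 - marg n ?cT j True"
        using marg_TF[of n ?cT j] condT[of i True True] inS by simp
      have sF: "marg n ?cF j False = 1 - marg n ?cF j True"
        using marg_TF[of n ?cF j] condT[of i True False] inS by simp
      have "tv_marg n ?cT ?cF j = \<bar>P i j / m i - (m j - P i j) / (1 - m i)\<bar>"
        unfolding tv_marg_def sT sF aT aF by (simp add: abs_minus_commute)
      also have "P i j / m i - (m j - P i j) / (1 - m i) = M i j"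
        using True unfolding M_def C_def V_def by (simp add: field_simps)
      finally have "\<bar>M i j\<bar> = tv_marg n ?cT ?cF j" by (simp only: eq_commute)
      also have "\<dots> \<le> B i j" unfolding B_eq by (rule Max_pair_ge[OF inS])
      finally show ?thesis .
    next
      case False
      obtain b where b: "b \<in> {b. 0 < marg n \<nu> i b}"
      proof (cases "0 < m i")
        case True
        then show ?thesis using that[of True] mT by auto
      next
        case False
        hence "0 < marg n \<nu> i False" using mF m0[of i] by simp
        then show ?thesis using that[of False] by auto
      qed
      have "\<bar>M i j\<bar> = tv_marg n (cond n \<nu> (insert i {}) (\<tau>0(i := b))) (cond n \<nu> (insert i {}) (\<tau>0(i := b))) j"
      proof -
        have "M i j = 0" using False unfolding M_def by auto
        thus ?thesis unfolding tv_self by simp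
      qed
      also have "\<dots> \<le> B i j" unfolding B_eq by (rule Max_pair_ge[OF b b])
      finally show ?thesis .
    qed
  qed
  have sr: "spectral_radius (mat n n (\<lambda>(i,j). complex_of_real (B i j))) \<le> \<eta>"
  proof -
    have "0 < pinprob n \<nu> {} \<tau>0" using s1 by (simp add: pinprob_def agrees_def)
    hence "spectral_radius (infl_mat n \<nu> {} \<tau>0) \<le> \<eta>" using si unfolding spec_indep_def by auto
    thus ?thesis unfolding infl_mat_def B_def .
  qed
  obtain c1 c2 where bnd: "\<And>k i j. i < n \<Longrightarrow> j < n \<Longrightarrow> \<bar>mpow n B k i j\<bar> \<le> \<eta> ^ k * (c1 + c2 * real k ^ (n - 1))"
    using mpow_bound[OF sr eta] by blast
  have pm: "(\<Sum>i<n. V i * d i * (\<Sum>j<n. M i j * d j)) \<le> \<eta> * (\<Sum>i<n. V i * d i ^ 2)"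
  proof (rule power_method[OF _ _ dom bnd eta])
    show "0 \<le> V i" for i unfolding V_def using m0[of i] m1[of i] by simp
    show "V i * M i j = V j * M j i" for i j using CVM Csym by metis
  qed
  have var: "(\<Sum>\<sigma>\<in>cube n. \<nu> \<sigma> * (\<Sum>i<n. ind \<sigma> i * d i)^2) - (\<Sum>\<sigma>\<in>cube n. \<nu> \<sigma> * (\<Sum>i<n. ind \<sigma> i * d i))^2
      = (\<Sum>i<n. V i * d i * (\<Sum>j<n. M i j * d j))"
  proof -
    have e1: "(\<Sum>\<sigma>\<in>cube n. \<nu> \<sigma> * (\<Sum>i<n. ind \<sigma> i * d i)^2) = (\<Sum>i<n. \<Sum>j<n. d i * d j * P i j)"
    proof -
      have "(\<Sum>\<sigma>\<in>cube n. \<nu> \<sigma> * (\<Sum>i<n. ind \<sigma> i * d i)^2)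
          = (\<Sum>\<sigma>\<in>cube n. \<Sum>i<n. \<Sum>j<n. d i * d j * (\<nu> \<sigma> * ind \<sigma> i * ind \<sigma> j))"
        by (simp add: power2_eq_square sum_product sum_distrib_left ac_simps)
      also have "\<dots> = (\<Sum>i<n. \<Sum>\<sigma>\<in>cube n. \<Sum>j<n. d i * d j * (\<nu> \<sigma> * ind \<sigma> i * ind \<sigma> j))"
        by (rule sum.swap)
      also have "\<dots> = (\<Sum>i<n. \<Sum>j<n. \<Sum>\<sigma>\<in>cube n. d i * d j * (\<nu> \<sigma> * ind \<sigma> i * ind \<sigma> j))"
        by (intro sum.cong refl sum.swap)
      also have "\<dots> = (\<Sum>i<n. \<Sum>j<n. d i * d j * P i j)"
        unfolding P_def by (simp add: sum_distrib_left)
      finally show ?thesis .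
    qed
    have e2: "(\<Sum>\<sigma>\<in>cube n. \<nu> \<sigma> * (\<Sum>i<n. ind \<sigma> i * d i)) = (\<Sum>i<n. d i * m i)"
    proof -
      have "(\<Sum>\<sigma>\<in>cube n. \<nu> \<sigma> * (\<Sum>i<n. ind \<sigma> i * d i)) = (\<Sum>\<sigma>\<in>cube n. \<Sum>i<n. d i * (\<nu> \<sigma> * ind \<sigma> i))"
        by (simp add: sum_distrib_left ac_simps)
      also have "\<dots> = (\<Sum>i<n. \<Sum>\<sigma>\<in>cube n. d i * (\<nu> \<sigma> * ind \<sigma> i))" by (rule sum.swap)
      also have "\<dots> = (\<Sum>i<n. d i * m i)" unfolding m_def by (simp add: sum_distrib_left)
      finally show ?thesis .
    qed
    have e3: "(\<Sum>i<n. d i * m i)^2 = (\<Sum>i<n. \<Sum>j<n. d i * d j * (m i * m j))"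
      by (simp add: power2_eq_square sum_product ac_simps)
    have "(\<Sum>i<n. \<Sum>j<n. d i * d j * P i j) - (\<Sum>i<n. \<Sum>j<n. d i * d j * (m i * m j))
        = (\<Sum>i<n. \<Sum>j<n. d i * d j * C i j)"
      unfolding C_def by (simp add: sum_subtractf[symmetric] algebra_simps)
    also have "\<dots> = (\<Sum>i<n. V i * d i * (\<Sum>j<n. M i j * d j))"
      by (simp add: CVM sum_distrib_left ac_simps)
    finally show ?thesis using e1 e2 e3 by simp
  qed
  have "(\<Sum>i<n. V i * d i ^ 2) = (\<Sum>i<n. m i * (1 - m i) * d i ^ 2)" unfolding V_def ..
  thus ?thesis using pm var unfolding m_def by simp
qed

lemma analytic_core:
  fixes n :: nat and \<mu> :: "(nat \<Rightarrow> bool) \<Rightarrow> real" and e :: "(nat \<Rightarrow> bool) \<Rightarrow> nat \<Rightarrow> real" and \<alpha> :: real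
  defines "E \<equiv> \<lambda>\<sigma> t. \<alpha> * (\<Sum>i<n. ln (1 + t * e \<sigma> i))"
  defines "E1 \<equiv> \<lambda>\<sigma> t. \<alpha> * (\<Sum>i<n. e \<sigma> i / (1 + t * e \<sigma> i))"
  defines "E2 \<equiv> \<lambda>\<sigma> t. - \<alpha> * (\<Sum>i<n. (e \<sigma> i / (1 + t * e \<sigma> i))^2)"
  defines "P \<equiv> \<lambda>t. \<Sum>\<sigma>\<in>cube n. \<mu> \<sigma> * exp (E \<sigma> t)"
  defines "P1 \<equiv> \<lambda>t. \<Sum>\<sigma>\<in>cube n. \<mu> \<sigma> * exp (E \<sigma> t) * E1 \<sigma> t"
  defines "P2 \<equiv> \<lambda>t. \<Sum>\<sigma>\<in>cube n. \<mu> \<sigma> * exp (E \<sigma> t) * (E1 \<sigma> t ^ 2 + E2 \<sigma> t)"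
  assumes nn: "\<And>\<sigma>. \<sigma> \<in> cube n \<Longrightarrow> 0 \<le> \<mu> \<sigma>" and s1: "(\<Sum>\<sigma>\<in>cube n. \<mu> \<sigma>) = 1"
    and pos: "\<And>\<sigma> i t. \<sigma> \<in> cube n \<Longrightarrow> i < n \<Longrightarrow> 0 \<le> t \<Longrightarrow> t \<le> 1 \<Longrightarrow> 0 < 1 + t * e \<sigma> i"
    and h0: "(\<Sum>\<sigma>\<in>cube n. \<mu> \<sigma> * (\<Sum>i<n. e \<sigma> i)) = 0"
    and key: "\<And>t. 0 \<le> t \<Longrightarrow> t \<le> 1 \<Longrightarrow> P2 t * P t \<le> (P1 t)^2"
  shows "P 1 \<le> 1"
proof -
  have pp: "False" if "\<sigma> \<in> cube n" "0 \<le> t" "t \<le> 1" "i < n" "1 + t * e \<sigma> i = 0" for \<sigma> t i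
    using pos[OF that(1,4,2,3)] that(5) by simp
  have dE: "(E \<sigma> has_real_derivative E1 \<sigma> t) (at t)" if "\<sigma> \<in> cube n" "0 \<le> t" "t \<le> 1" for \<sigma> t
  proof -
    have "((\<lambda>t. \<alpha> * (\<Sum>i<n. ln (1 + t * e \<sigma> i))) has_real_derivative \<alpha> * (\<Sum>i<n. e \<sigma> i / (1 + t * e \<sigma> i))) (at t)"
      using pos[OF that(1) _ that(2,3)]
      by (auto intro!: derivative_eq_intros simp: field_simps)
    thus ?thesis unfolding E_def E1_def .
  qed
  have dE1: "(E1 \<sigma> has_real_derivative E2 \<sigma> t) (at t)" if "\<sigma> \<in> cube n" "0 \<le> t" "t \<le> 1" for \<sigma> t
  proof -
    have "((\<lambda>t. \<alpha> * (\<Sum>i<n. e \<sigma> i / (1 + t * e \<sigma> i))) has_real_derivative - \<alpha> * (\<Sum>i<n. (e \<sigma> i / (1 + t * e \<sigma> i))^2)) (at t)"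
    proof -
      have "((\<lambda>t. \<alpha> * (\<Sum>i<n. e \<sigma> i / (1 + t * e \<sigma> i))) has_real_derivative \<alpha> * (\<Sum>i<n. - (e \<sigma> i * e \<sigma> i) / ((1 + t * e \<sigma> i) * (1 + t * e \<sigma> i)))) (at t)"
          using pos[OF that(1) _ that(2,3)]
        by (auto intro!: derivative_eq_intros DERIV_sum simp: field_simps) (metis less_irrefl)
      moreover have "\<alpha> * (\<Sum>i<n. - (e \<sigma> i * e \<sigma> i) / ((1 + t * e \<sigma> i) * (1 + t * e \<sigma> i))) = - \<alpha> * (\<Sum>i<n. (e \<sigma> i / (1 + t * e \<sigma> i))^2)"
        by (simp add: power2_eq_square sum_negf)
      ultimately show ?thesis by simp
    qed
    thus ?thesis unfolding E1_def E2_def .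
  qed
  have dP: "(P has_real_derivative P1 t) (at t)" if "0 \<le> t" "t \<le> 1" for t
  proof -
    have "((\<lambda>t. \<Sum>\<sigma>\<in>cube n. \<mu> \<sigma> * exp (E \<sigma> t)) has_real_derivative (\<Sum>\<sigma>\<in>cube n. \<mu> \<sigma> * (exp (E \<sigma> t) * E1 \<sigma> t))) (at t)"
      by (intro DERIV_sum DERIV_cmult DERIV_chain2[OF DERIV_exp] dE that) 
    thus ?thesis unfolding P_def P1_def by (simp add: ac_simps)
  qed
  have dP1: "(P1 has_real_derivative P2 t) (at t)" if "0 \<le> t" "t \<le> 1" for t
  proof -
    have "((\<lambda>t. \<Sum>\<sigma>\<in>cube n. \<mu> \<sigma> * (exp (E \<sigma> t) * E1 \<sigma> t)) has_real_derivative
        (\<Sum>\<sigma>\<in>cube n. \<mu> \<sigma> * (exp (E \<sigma> t) * E1 \<sigma> t * E1 \<sigma> t + exp (E \<sigma> t) * E2 \<sigma> t))) (at t)"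
    proof (intro DERIV_sum DERIV_cmult)
      fix \<sigma> assume s: "\<sigma> \<in> cube n"
      have "((\<lambda>x. exp (E \<sigma> x) * E1 \<sigma> x) has_real_derivative exp (E \<sigma> t) * E1 \<sigma> t * E1 \<sigma> t + exp (E \<sigma> t) * E2 \<sigma> t) (at t)"
        using DERIV_mult'[OF DERIV_chain2[OF DERIV_exp dE[OF s that]] dE1[OF s that]] by (simp add: add.commute)
      thus "((\<lambda>x. exp (E \<sigma> x) * E1 \<sigma> x) has_real_derivative exp (E \<sigma> t) * E1 \<sigma> t * E1 \<sigma> t + exp (E \<sigma> t) * E2 \<sigma> t) (at t)" .
    qed
    thus ?thesis unfolding P1_def P2_def by (simp add: algebra_simps power2_eq_square)
  qed
  obtain \<sigma>0 where s0: "\<sigma>0 \<in> cube n" "0 < \<mu> \<sigma>0"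
  proof (rule ccontr)
    assume "\<not> thesis"
    hence "\<forall>\<sigma>\<in>cube n. \<mu> \<sigma> = 0" using that nn by force
    hence "(\<Sum>\<sigma>\<in>cube n. \<mu> \<sigma>) = 0" by simp
    thus False using s1 by simp
  qed
  have Ppos: "0 < P t" for t
  proof -
    have "\<mu> \<sigma>0 * exp (E \<sigma>0 t) \<le> P t"
      unfolding P_def using s0 nn by (intro member_le_sum[OF s0(1)]) (auto simp: finite_cube)
    moreover have "0 < \<mu> \<sigma>0 * exp (E \<sigma>0 t)" using s0 by simp
    ultimately show ?thesis by linarith
  qed
  have P0: "P 0 = 1" unfolding P_def E_def using s1 by simp
  have P10: "P1 0 = 0" unfolding P1_def E_def E1_def using h0
    by (simp add: sum_distrib_left[symmetric] mult.left_commute[of _ \<alpha>])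
  have hdec: "P1 t / P t \<le> P1 0 / P 0" if "0 \<le> t" "t \<le> 1" for t
  proof (rule DERIV_nonpos_imp_nonincreasing[OF that(1)])
    fix u assume u: "0 \<le> u" "u \<le> t"
    have "((\<lambda>t. P1 t / P t) has_real_derivative (P2 u * P u - P1 u * P1 u) / (P u * P u)) (at u)"
      using u that Ppos[of u] by (intro DERIV_divide dP dP1) auto
    moreover have "(P2 u * P u - P1 u * P1 u) / (P u * P u) \<le> 0"
      using key[of u] u that by (intro divide_nonpos_nonneg) (auto simp: power2_eq_square)
    ultimately show "\<exists>y. ((\<lambda>t. P1 t / P t) has_real_derivative y) (at u) \<and> y \<le> 0" by blast
  qed
  have "P 1 \<le> P 0"
  proof (rule DERIV_nonpos_imp_nonincreasing[of 0 1])
    fix u :: real assume u: "0 \<le> u" "u \<le> 1"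
    have "P1 u / P u \<le> 0" using hdec[OF u] P0 P10 by simp
    hence "P1 u \<le> 0" using Ppos[of u] by (simp add: divide_le_0_iff)
    thus "\<exists>y. (P has_real_derivative y) (at u) \<and> y \<le> 0" using dP[OF u] by blast
  qed simp
  thus ?thesis using P0 by simp
qed

lemma key_lemma:
  fixes \<nu> :: "(nat \<Rightarrow> bool) \<Rightarrow> real" and At Bt :: "nat \<Rightarrow> real"
  assumes nn: "\<And>\<sigma>. \<sigma> \<in> cube n \<Longrightarrow> 0 \<le> \<nu> \<sigma>" and s1: "(\<Sum>\<sigma>\<in>cube n. \<nu> \<sigma>) = 1"
    and si: "spec_indep n \<eta> \<nu>" and eta: "0 < \<eta>" and al: "0 < \<alpha>" "\<alpha> * \<eta> \<le> 1"
  shows "(\<Sum>\<sigma>\<in>cube n. \<nu> \<sigma> * ((\<alpha> * (\<Sum>i<n. Bt i + ind \<sigma> i * (At i - Bt i)))^2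
            + - \<alpha> * (\<Sum>i<n. Bt i ^ 2 + ind \<sigma> i * (At i ^ 2 - Bt i ^ 2))))
       \<le> (\<Sum>\<sigma>\<in>cube n. \<nu> \<sigma> * (\<alpha> * (\<Sum>i<n. Bt i + ind \<sigma> i * (At i - Bt i))))^2"
proof -
  define dd where "dd i = At i - Bt i" for i
  define K where "K = (\<Sum>i<n. Bt i)"
  define X where "X \<sigma> = (\<Sum>i<n. ind \<sigma> i * dd i)" for \<sigma>
  define m where "m i = (\<Sum>\<sigma>\<in>cube n. \<nu> \<sigma> * ind \<sigma> i)" for i
  define SX where "SX = (\<Sum>\<sigma>\<in>cube n. \<nu> \<sigma> * X \<sigma>)"
  define SX2 where "SX2 = (\<Sum>\<sigma>\<in>cube n. \<nu> \<sigma> * X \<sigma> ^ 2)"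
  have E1eq: "(\<Sum>i<n. Bt i + ind \<sigma> i * (At i - Bt i)) = K + X \<sigma>" for \<sigma>
    unfolding K_def X_def dd_def by (simp add: sum.distrib)
  have m0: "0 \<le> m i" for i unfolding m_def using nn by (auto intro!: sum_nonneg simp: ind_def)
  have m1: "m i \<le> 1" for i
  proof -
    have "m i \<le> (\<Sum>\<sigma>\<in>cube n. \<nu> \<sigma>)" unfolding m_def by (intro sum_mono) (use nn in \<open>auto simp: ind_def\<close>)
    thus ?thesis using s1 by simp
  qed
  have SY: "(\<Sum>\<sigma>\<in>cube n. \<nu> \<sigma> * (\<Sum>i<n. Bt i ^ 2 + ind \<sigma> i * (At i ^ 2 - Bt i ^ 2)))
      = (\<Sum>i<n. Bt i ^ 2 + m i * (At i ^ 2 - Bt i ^ 2))"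
  proof -
    have "(\<Sum>\<sigma>\<in>cube n. \<nu> \<sigma> * (\<Sum>i<n. Bt i ^ 2 + ind \<sigma> i * (At i ^ 2 - Bt i ^ 2)))
        = (\<Sum>\<sigma>\<in>cube n. \<Sum>i<n. \<nu> \<sigma> * Bt i ^ 2 + (\<nu> \<sigma> * ind \<sigma> i) * (At i ^ 2 - Bt i ^ 2))"
      by (simp add: sum_distrib_left algebra_simps)
    also have "\<dots> = (\<Sum>i<n. \<Sum>\<sigma>\<in>cube n. \<nu> \<sigma> * Bt i ^ 2 + (\<nu> \<sigma> * ind \<sigma> i) * (At i ^ 2 - Bt i ^ 2))"
      by (rule sum.swap)
    also have "\<dots> = (\<Sum>i<n. Bt i ^ 2 + m i * (At i ^ 2 - Bt i ^ 2))"
      unfolding m_def by (simp add: sum.distrib sum_distrib_right[symmetric] s1)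
    finally show ?thesis .
  qed
  have var: "SX2 - SX^2 \<le> \<eta> * (\<Sum>i<n. m i * (1 - m i) * dd i ^ 2)"
    using variance_bound[OF nn s1 si eta, of dd] unfolding SX_def SX2_def X_def m_def by simp
  have step2: "\<alpha> * (\<eta> * (\<Sum>i<n. m i * (1 - m i) * dd i ^ 2)) \<le> (\<Sum>i<n. Bt i ^ 2 + m i * (At i ^ 2 - Bt i ^ 2))"
  proof -
    have nnT: "0 \<le> (\<Sum>i<n. m i * (1 - m i) * dd i ^ 2)"
      using m0 m1 by (intro sum_nonneg mult_nonneg_nonneg) auto
    have "\<alpha> * (\<eta> * (\<Sum>i<n. m i * (1 - m i) * dd i ^ 2)) \<le> (\<Sum>i<n. m i * (1 - m i) * dd i ^ 2)"
      using al nnT mult_right_mono[OF al(2) nnT] by (simp add: mult.assoc)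
    also have "\<dots> \<le> (\<Sum>i<n. Bt i ^ 2 + m i * (At i ^ 2 - Bt i ^ 2))"
    proof (rule sum_mono)
      fix i
      have "Bt i ^ 2 + m i * (At i ^ 2 - Bt i ^ 2) - m i * (1 - m i) * dd i ^ 2 = (m i * At i + (1 - m i) * Bt i)^2"
        unfolding dd_def by (simp add: power2_eq_square algebra_simps)
      thus "m i * (1 - m i) * dd i ^ 2 \<le> Bt i ^ 2 + m i * (At i ^ 2 - Bt i ^ 2)"
        by (metis diff_ge_0_iff_ge zero_le_power2)
    qed
    finally show ?thesis .
  qed
  have lhs: "(\<Sum>\<sigma>\<in>cube n. \<nu> \<sigma> * ((\<alpha> * (\<Sum>i<n. Bt i + ind \<sigma> i * (At i - Bt i)))^2
            + - \<alpha> * (\<Sum>i<n. Bt i ^ 2 + ind \<sigma> i * (At i ^ 2 - Bt i ^ 2))))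
      = \<alpha>^2 * (K^2 + 2 * K * SX + SX2) - \<alpha> * (\<Sum>i<n. Bt i ^ 2 + m i * (At i ^ 2 - Bt i ^ 2))"
  proof -
    have "(\<Sum>\<sigma>\<in>cube n. \<nu> \<sigma> * ((\<alpha> * (\<Sum>i<n. Bt i + ind \<sigma> i * (At i - Bt i)))^2
            + - \<alpha> * (\<Sum>i<n. Bt i ^ 2 + ind \<sigma> i * (At i ^ 2 - Bt i ^ 2))))
       = (\<Sum>\<sigma>\<in>cube n. \<alpha>^2 * (K^2 * \<nu> \<sigma> + 2 * K * (\<nu> \<sigma> * X \<sigma>) + \<nu> \<sigma> * X \<sigma> ^ 2))
         - \<alpha> * (\<Sum>\<sigma>\<in>cube n. \<nu> \<sigma> * (\<Sum>i<n. Bt i ^ 2 + ind \<sigma> i * (At i ^ 2 - Bt i ^ 2)))"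
    proof -
      have gen: "(\<Sum>\<sigma>\<in>cube n. \<nu> \<sigma> * ((\<alpha> * (K + X \<sigma>))^2 + - \<alpha> * Y \<sigma>))
        = (\<Sum>\<sigma>\<in>cube n. \<alpha>^2 * (K^2 * \<nu> \<sigma> + 2 * K * (\<nu> \<sigma> * X \<sigma>) + \<nu> \<sigma> * X \<sigma> ^ 2))
         - \<alpha> * (\<Sum>\<sigma>\<in>cube n. \<nu> \<sigma> * Y \<sigma>)" for Y
      proof -
        have "(\<Sum>\<sigma>\<in>cube n. \<nu> \<sigma> * ((\<alpha> * (K + X \<sigma>))^2 + - \<alpha> * Y \<sigma>))
          = (\<Sum>\<sigma>\<in>cube n. \<alpha>^2 * (K^2 * \<nu> \<sigma> + 2 * K * (\<nu> \<sigma> * X \<sigma>) + \<nu> \<sigma> * X \<sigma> ^ 2) - \<alpha> * (\<nu> \<sigma> * Y \<sigma>))"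
          by (intro sum.cong refl) (simp add: power2_eq_square algebra_simps)
        also have "\<dots> = (\<Sum>\<sigma>\<in>cube n. \<alpha>^2 * (K^2 * \<nu> \<sigma> + 2 * K * (\<nu> \<sigma> * X \<sigma>) + \<nu> \<sigma> * X \<sigma> ^ 2))
         - \<alpha> * (\<Sum>\<sigma>\<in>cube n. \<nu> \<sigma> * Y \<sigma>)"
          by (simp only: sum_subtractf sum_distrib_left)
        finally show ?thesis .
      qed
      show ?thesis unfolding E1eq by (rule gen)
    qed
    also have "\<dots> = \<alpha>^2 * (K^2 + 2 * K * SX + SX2) - \<alpha> * (\<Sum>i<n. Bt i ^ 2 + m i * (At i ^ 2 - Bt i ^ 2))"
      unfolding SY SX_def SX2_def by (simp add: sum.distrib sum_distrib_left[symmetric] s1)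
    finally show ?thesis .
  qed
  have rhs: "(\<Sum>\<sigma>\<in>cube n. \<nu> \<sigma> * (\<alpha> * (\<Sum>i<n. Bt i + ind \<sigma> i * (At i - Bt i))))^2 = \<alpha>^2 * (K + SX)^2"
  proof -
    have "(\<Sum>\<sigma>\<in>cube n. \<nu> \<sigma> * (\<alpha> * (\<Sum>i<n. Bt i + ind \<sigma> i * (At i - Bt i)))) = \<alpha> * (K + SX)"
      unfolding E1eq SX_def by (simp add: sum.distrib sum_distrib_left[symmetric] algebra_simps s1)
    thus ?thesis by (simp add: power_mult_distrib)
  qed
  have "\<alpha>^2 * (SX2 - SX^2) \<le> \<alpha>^2 * (\<eta> * (\<Sum>i<n. m i * (1 - m i) * dd i ^ 2))"
    using var by (intro mult_left_mono) auto
  also have "\<dots> = \<alpha> * (\<alpha> * (\<eta> * (\<Sum>i<n. m i * (1 - m i) * dd i ^ 2)))" by (simp add: power2_eq_square)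
  also have "\<dots> \<le> \<alpha> * (\<Sum>i<n. Bt i ^ 2 + m i * (At i ^ 2 - Bt i ^ 2))"
    using step2 al by (intro mult_left_mono) auto
  finally have "\<alpha>^2 * (SX2 - SX^2) \<le> \<alpha> * (\<Sum>i<n. Bt i ^ 2 + m i * (At i ^ 2 - Bt i ^ 2))" .
  thus ?thesis unfolding lhs rhs by (simp add: power2_eq_square algebra_simps)
qed

theorem lemma5p2:
  fixes n :: nat and \<mu> :: "(nat \<Rightarrow> bool) \<Rightarrow> real" and \<eta> \<epsilon> \<alpha> :: real and x :: "nat \<Rightarrow> real"
  assumes "\<eta> > 1" and "\<epsilon> > 0"
    and "is_distr n \<mu>"
    and "complete_spec_indep n \<eta> \<epsilon> \<mu>"
    and "0 < \<alpha>" and "\<alpha> \<le> 1 / (2 * \<eta>)"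
    and "\<forall>i<n. 0 < x i \<and> x i \<le> (1 + \<epsilon>) powr (1 / \<alpha>)"
  shows "Ffun n \<mu> \<alpha> x \<le> 1"
proof -
  note eta1 = assms(1) and epos = assms(2) and csi = assms(4) and al = assms(5) and al2 = assms(6)
  have nn: "\<And>\<sigma>. \<sigma> \<in> cube n \<Longrightarrow> 0 \<le> \<mu> \<sigma>" and s1: "(\<Sum>\<sigma>\<in>cube n. \<mu> \<sigma>) = 1"
    using assms(3) unfolding is_distr_def by auto
  have xpos: "\<And>i. i < n \<Longrightarrow> 0 < x i" and xle: "\<And>i. i < n \<Longrightarrow> x i \<le> (1 + \<epsilon>) powr (1 / \<alpha>)"
    using assms(7) by auto
  have eta: "0 < \<eta>" using eta1 by simp
  have aleta: "\<alpha> * \<eta> \<le> 1"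
  proof -
    have "\<alpha> * \<eta> \<le> 1 / (2 * \<eta>) * \<eta>" using al2 eta by (intro mult_right_mono) auto
    thus ?thesis using eta by simp
  qed
  define p where "p i = marg n \<mu> i True" for i
  define q where "q i = marg n \<mu> i False" for i
  have pq: "p i + q i = 1" for i unfolding p_def q_def using marg_TF[of n \<mu> i] s1 by simp
  have p0: "0 \<le> p i" for i unfolding p_def marg_def using nn by (auto intro!: sum_nonneg)
  have q0: "0 \<le> q i" for i unfolding q_def marg_def using nn by (auto intro!: sum_nonneg)
  define s where "s i = p i * x i + q i" for i
  have spos: "0 < s i" if "i < n" for i
  proof (cases "p i = 0")
    case True
    then show ?thesis unfolding s_def using pq[of i] by simp
  next
    case False
    hence "0 < p i * x i" using p0[of i] xpos[OF that] by simp
    then show ?thesis unfolding s_def using q0[of i] by simp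
  qed
  define c where "c i = 1 / s i" for i
  have cpos: "0 < c i" if "i < n" for i unfolding c_def using spos[OF that] by simp
  define e where "e \<sigma> i = (if \<sigma> i then c i * x i - 1 else c i - 1)" for \<sigma> :: "nat \<Rightarrow> bool" and i
  define zf where "zf i t = 1 + t * (c i * x i - 1)" for i and t :: real
  define wf where "wf i t = 1 + t * (c i - 1)" for i and t :: real
  have ye: "1 + t * e \<sigma> i = (if \<sigma> i then zf i t else wf i t)" for t \<sigma> i
    unfolding e_def zf_def wf_def by simp
  have lin_pos: "0 < 1 + t * (a - 1)" if "0 \<le> t" "t \<le> 1" "0 < a" for t a :: real
  proof (cases "t < 1")
    case True
    have "0 \<le> t * a" using that by simp
    thus ?thesis using True by (simp add: algebra_simps)
  next
    case False
    hence "t = 1" using that by simp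
    thus ?thesis using that by simp
  qed
  have zpos: "0 < zf i t" if "i < n" "0 \<le> t" "t \<le> 1" for i t
    unfolding zf_def using lin_pos[OF that(2,3)] cpos[OF that(1)] xpos[OF that(1)] by simp
  have wpos: "0 < wf i t" if "i < n" "0 \<le> t" "t \<le> 1" for i t
    unfolding wf_def using lin_pos[OF that(2,3)] cpos[OF that(1)] by simp
  have pos: "0 < 1 + t * e \<sigma> i" if "\<sigma> \<in> cube n" "i < n" "0 \<le> t" "t \<le> 1" for \<sigma> i t
    unfolding ye using zpos[OF that(2-4)] wpos[OF that(2-4)] by simp
  have h0: "(\<Sum>\<sigma>\<in>cube n. \<mu> \<sigma> * (\<Sum>i<n. e \<sigma> i)) = 0"
  proof -
    have "(\<Sum>\<sigma>\<in>cube n. \<mu> \<sigma> * (\<Sum>i<n. e \<sigma> i)) = (\<Sum>\<sigma>\<in>cube n. \<Sum>i<n. \<mu> \<sigma> * e \<sigma> i)"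
      by (simp add: sum_distrib_left)
    also have "\<dots> = (\<Sum>i<n. \<Sum>\<sigma>\<in>cube n. \<mu> \<sigma> * e \<sigma> i)" by (rule sum.swap)
    also have "\<dots> = (\<Sum>i<n. p i * (c i * x i - 1) + q i * (c i - 1))"
    proof (rule sum.cong[OF refl])
      fix i assume i: "i \<in> {..<n}"
      have "(\<Sum>\<sigma>\<in>cube n. \<mu> \<sigma> * e \<sigma> i) = (\<Sum>\<sigma>\<in>cube n. (if \<sigma> i = True then \<mu> \<sigma> else 0) * (c i * x i - 1)
           + (if \<sigma> i = False then \<mu> \<sigma> else 0) * (c i - 1))"
        by (rule sum.cong) (auto simp: e_def)
      also have "\<dots> = p i * (c i * x i - 1) + q i * (c i - 1)"
        unfolding p_def q_def marg_sum by (simp only: sum.distrib sum_distrib_right)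
      finally show "(\<Sum>\<sigma>\<in>cube n. \<mu> \<sigma> * e \<sigma> i) = p i * (c i * x i - 1) + q i * (c i - 1)" .
    qed
    also have "\<dots> = (\<Sum>i<n. 0)"
    proof (rule sum.cong[OF refl])
      fix i assume i: "i \<in> {..<n}"
      have "p i * (c i * x i - 1) + q i * (c i - 1) = c i * s i - (p i + q i)"
        unfolding s_def by (simp add: algebra_simps)
      also have "\<dots> = 0" using pq[of i] spos[of i] i unfolding c_def by simp
      finally show "p i * (c i * x i - 1) + q i * (c i - 1) = 0" .
    qed
    finally show ?thesis by simp
  qed
  define lamf where "lamf t i = exp (\<alpha> * (ln (zf i t) - ln (wf i t)))" for t i
  define Kwf where "Kwf t = exp (\<alpha> * (\<Sum>i<n. ln (wf i t)))" for t
  define Lf where "Lf t \<sigma> = (\<Prod>i\<in>{i. i < n \<and> \<sigma> i}. lamf t i)" for t \<sigma>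
  have expE: "exp (\<alpha> * (\<Sum>i<n. ln (1 + t * e \<sigma> i))) = Kwf t * Lf t \<sigma>" for t \<sigma>
  proof -
    have fin: "finite {i. i < n \<and> \<sigma> i}" by simp
    have "(\<Sum>i<n. ln (1 + t * e \<sigma> i)) = (\<Sum>i<n. ln (wf i t) + (if \<sigma> i then ln (zf i t) - ln (wf i t) else 0))"
      by (rule sum.cong) (auto simp: ye)
    also have "\<dots> = (\<Sum>i<n. ln (wf i t)) + (\<Sum>i\<in>{i. i < n \<and> \<sigma> i}. ln (zf i t) - ln (wf i t))"
    proof -
      have "{i \<in> {..<n}. \<sigma> i} = {i. i < n \<and> \<sigma> i}" by auto
      thus ?thesis by (simp add: sum.distrib sum.inter_filter[symmetric])
    qed
    finally have "\<alpha> * (\<Sum>i<n. ln (1 + t * e \<sigma> i)) = \<alpha> * (\<Sum>i<n. ln (wf i t)) + (\<Sum>i\<in>{i. i < n \<and> \<sigma> i}. \<alpha> * (ln (zf i t) - ln (wf i t)))"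
      by (simp add: algebra_simps sum_distrib_left)
    thus ?thesis unfolding Kwf_def Lf_def lamf_def by (simp add: exp_add exp_sum[OF fin])
  qed
  have lampos: "0 < lamf t i" for t i unfolding lamf_def by simp
  have lamle: "lamf t i \<le> 1 + \<epsilon>" if "i < n" "0 \<le> t" "t \<le> 1" for t i
  proof -
    have z: "0 < zf i t" and w: "0 < wf i t" using zpos[OF that] wpos[OF that] by auto
    have xi: "0 < x i" using xpos[OF that(1)] .
    have ci: "0 < c i" using cpos[OF that(1)] .
    show ?thesis
    proof (cases "x i \<le> 1")
      case True
      have "zf i t - wf i t = t * c i * (x i - 1)" unfolding zf_def wf_def by (simp add: algebra_simps)
      also have "\<dots> \<le> 0" using True that ci by (intro mult_nonneg_nonpos) auto
      finally have "ln (zf i t) \<le> ln (wf i t)" using z w by simp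
      hence "\<alpha> * (ln (zf i t) - ln (wf i t)) \<le> 0" using al by (simp add: mult_nonneg_nonpos)
      hence "lamf t i \<le> 1" unfolding lamf_def by simp
      thus ?thesis using epos by simp
    next
      case False
      have "zf i t - x i * wf i t = (1 - x i) * (1 - t)" unfolding zf_def wf_def by (simp add: algebra_simps)
      also have "\<dots> \<le> 0" using False that by (intro mult_nonpos_nonneg) auto
      finally have "zf i t \<le> x i * wf i t" by simp
      hence "ln (zf i t) \<le> ln (x i * wf i t)" using z xi w by simp
      hence "ln (zf i t) - ln (wf i t) \<le> ln (x i)" using xi w by (simp add: ln_mult)
      hence A: "\<alpha> * (ln (zf i t) - ln (wf i t)) \<le> \<alpha> * ln (x i)" using al by (simp add: mult_left_mono)
      have "ln (x i) \<le> ln ((1 + \<epsilon>) powr (1 / \<alpha>))" using xle[OF that(1)] xi epos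
        by (subst ln_le_cancel_iff) auto
      hence "ln (x i) \<le> ln (1 + \<epsilon>) / \<alpha>" using epos by (simp add: ln_powr)
      hence "\<alpha> * ln (x i) \<le> ln (1 + \<epsilon>)" using al by (simp add: le_divide_eq mult.commute)
      with A have "\<alpha> * (ln (zf i t) - ln (wf i t)) \<le> ln (1 + \<epsilon>)" by linarith
      hence "lamf t i \<le> exp (ln (1 + \<epsilon>))" unfolding lamf_def by simp
      thus ?thesis using epos by simp
    qed
  qed
  obtain \<sigma>0 where s0: "\<sigma>0 \<in> cube n" "0 < \<mu> \<sigma>0"
  proof (rule ccontr)
    assume "\<not> thesis"
    hence "\<forall>\<sigma>\<in>cube n. \<mu> \<sigma> = 0" using that nn by force
    hence "(\<Sum>\<sigma>\<in>cube n. \<mu> \<sigma>) = 0" by simp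
    thus False using s1 by simp
  qed
  have Lpos: "0 < Lf t \<sigma>" for t \<sigma> unfolding Lf_def using lampos by (intro prod_pos) auto
  have Zpos: "0 < (\<Sum>\<rho>\<in>cube n. \<mu> \<rho> * Lf t \<rho>)" for t
  proof -
    have "\<mu> \<sigma>0 * Lf t \<sigma>0 \<le> (\<Sum>\<rho>\<in>cube n. \<mu> \<rho> * Lf t \<rho>)"
      using s0 nn Lpos by (intro member_le_sum) (auto simp: finite_cube less_imp_le)
    moreover have "0 < \<mu> \<sigma>0 * Lf t \<sigma>0" using s0 Lpos by simp
    ultimately show ?thesis by linarith
  qed
  define E where "E \<equiv> \<lambda>\<sigma> t. \<alpha> * (\<Sum>i<n. ln (1 + t * e \<sigma> i))"
  define E1 where "E1 \<equiv> \<lambda>\<sigma> t. \<alpha> * (\<Sum>i<n. e \<sigma> i / (1 + t * e \<sigma> i))"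
  define E2 where "E2 \<equiv> \<lambda>\<sigma> t. - \<alpha> * (\<Sum>i<n. (e \<sigma> i / (1 + t * e \<sigma> i))^2)"
  define P where "P \<equiv> \<lambda>t. \<Sum>\<sigma>\<in>cube n. \<mu> \<sigma> * exp (E \<sigma> t)"
  define P1 where "P1 \<equiv> \<lambda>t. \<Sum>\<sigma>\<in>cube n. \<mu> \<sigma> * exp (E \<sigma> t) * E1 \<sigma> t"
  define P2 where "P2 \<equiv> \<lambda>t. \<Sum>\<sigma>\<in>cube n. \<mu> \<sigma> * exp (E \<sigma> t) * (E1 \<sigma> t ^ 2 + E2 \<sigma> t)"
  have key: "P2 t * P t \<le> (P1 t)^2" if t: "0 \<le> t" "t \<le> 1" for t
  proof -
    define \<nu> where "\<nu> = tilt n (lamf t) \<mu>"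
    define Z where "Z = (\<Sum>\<rho>\<in>cube n. \<mu> \<rho> * Lf t \<rho>)"
    have Z: "0 < Z" unfolding Z_def by (rule Zpos)
    have Kw: "0 < Kwf t" unfolding Kwf_def by simp
    have nu_eq: "\<nu> \<sigma> = \<mu> \<sigma> * Lf t \<sigma> / Z" for \<sigma> unfolding \<nu>_def tilt_def Z_def Lf_def ..
    have si: "spec_indep n \<eta> \<nu>"
      using csi lampos lamle[OF _ t] unfolding complete_spec_indep_def \<nu>_def by blast
    have nu_nn: "0 \<le> \<nu> \<sigma>" if "\<sigma> \<in> cube n" for \<sigma>
      unfolding nu_eq using nn[OF that] Lpos[of t \<sigma>] Z by simp
    have nu_s1: "(\<Sum>\<sigma>\<in>cube n. \<nu> \<sigma>) = 1"
      unfolding nu_eq using Z by (simp add: sum_divide_distrib[symmetric] Z_def)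
    have transfer: "(\<Sum>\<sigma>\<in>cube n. \<mu> \<sigma> * exp (E \<sigma> t) * f \<sigma>) = P t * (\<Sum>\<sigma>\<in>cube n. \<nu> \<sigma> * f \<sigma>)" for f
    proof -
      have PZ: "P t = Kwf t * Z" unfolding P_def E_def Z_def expE by (simp add: sum_distrib_left ac_simps)
      have "(\<Sum>\<sigma>\<in>cube n. \<mu> \<sigma> * exp (E \<sigma> t) * f \<sigma>) = Kwf t * (\<Sum>\<sigma>\<in>cube n. \<mu> \<sigma> * Lf t \<sigma> * f \<sigma>)"
        unfolding E_def expE by (simp add: sum_distrib_left ac_simps)
      also have "\<dots> = Kwf t * Z * (\<Sum>\<sigma>\<in>cube n. \<nu> \<sigma> * f \<sigma>)"
      proof -
        have sv: "(\<Sum>\<sigma>\<in>cube n. \<nu> \<sigma> * f \<sigma>) = (\<Sum>\<sigma>\<in>cube n. \<mu> \<sigma> * Lf t \<sigma> * f \<sigma>) / Z"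
          unfolding nu_eq sum_divide_distrib by (rule sum.cong) auto
        show ?thesis unfolding sv using Z by simp
      qed
      finally show ?thesis unfolding PZ .
    qed
    define At where "At i = (c i * x i - 1) / zf i t" for i
    define Bt where "Bt i = (c i - 1) / wf i t" for i
    have E1eq: "E1 \<sigma> t = \<alpha> * (\<Sum>i<n. Bt i + ind \<sigma> i * (At i - Bt i))" for \<sigma>
      unfolding E1_def by (intro arg_cong[where f = "\<lambda>u. \<alpha> * u"] sum.cong refl)
        (simp add: At_def Bt_def ind_def e_def zf_def wf_def)
    have E2eq: "E2 \<sigma> t = - \<alpha> * (\<Sum>i<n. Bt i ^ 2 + ind \<sigma> i * (At i ^ 2 - Bt i ^ 2))" for \<sigma>
      unfolding E2_def by (intro arg_cong[where f = "\<lambda>u. - \<alpha> * u"] sum.cong refl)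
        (simp add: At_def Bt_def ind_def e_def zf_def wf_def)
    have P1eq: "P1 t = P t * (\<Sum>\<sigma>\<in>cube n. \<nu> \<sigma> * (\<alpha> * (\<Sum>i<n. Bt i + ind \<sigma> i * (At i - Bt i))))"
      unfolding P1_def transfer[symmetric] E1eq ..
    have P2eq: "P2 t = P t * (\<Sum>\<sigma>\<in>cube n. \<nu> \<sigma> * ((\<alpha> * (\<Sum>i<n. Bt i + ind \<sigma> i * (At i - Bt i)))^2
            + - \<alpha> * (\<Sum>i<n. Bt i ^ 2 + ind \<sigma> i * (At i ^ 2 - Bt i ^ 2))))"
      unfolding P2_def transfer[symmetric] E1eq E2eq ..
    note kl = key_lemma[OF nu_nn nu_s1 si eta al aleta, of Bt At]
    have gen: "(a * b) * a \<le> (a * d)^2" if "b \<le> d^2" for a b d :: real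
    proof -
      have "a^2 * b \<le> a^2 * d^2" using that by (intro mult_left_mono) auto
      thus ?thesis by (simp add: power2_eq_square algebra_simps)
    qed
    show ?thesis unfolding P1eq P2eq by (rule gen[OF kl])
  qed
  have P1le: "P 1 \<le> 1" unfolding P_def E_def
    by (rule analytic_core[OF nn s1 pos h0 key[unfolded P_def P1_def P2_def E_def E1_def E2_def]])
  have lam1: "lamf 1 i = x i powr \<alpha>" if i: "i < n" for i
  proof -
    have "ln (zf i 1) - ln (wf i 1) = ln (x i)"
      unfolding zf_def wf_def using cpos[OF i] xpos[OF i] by (simp add: ln_mult)
    thus ?thesis unfolding lamf_def powr_def using xpos[OF i] by (simp add: mult.commute)
  qed
  have L1: "Lf 1 \<sigma> = (\<Prod>i\<in>{i. i < n \<and> \<sigma> i}. x i powr \<alpha>)" for \<sigma>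
    unfolding Lf_def by (rule prod.cong) (auto simp: lam1)
  define G where "G = gpoly n \<mu> (\<lambda>i. x i powr \<alpha>)"
  have G_eq: "G = (\<Sum>\<sigma>\<in>cube n. \<mu> \<sigma> * Lf 1 \<sigma>)" unfolding G_def gpoly_def L1 ..
  have Gpos: "0 < G" unfolding G_eq by (rule Zpos)
  have PG: "P 1 = Kwf 1 * G" unfolding P_def E_def G_eq expE by (simp add: sum_distrib_left ac_simps)
  have Kw1: "Kwf 1 = exp (- (\<alpha> * (\<Sum>i<n. ln (s i))))"
  proof -
    have "(\<Sum>i<n. ln (wf i 1)) = (\<Sum>i<n. - ln (s i))"
      by (rule sum.cong) (auto simp: wf_def c_def ln_div spos)
    thus ?thesis unfolding Kwf_def by (simp add: sum_negf)
  qed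
  have "exp (- (\<alpha> * (\<Sum>i<n. ln (s i)))) * G \<le> 1" using P1le PG Kw1 by simp
  hence "G \<le> exp (\<alpha> * (\<Sum>i<n. ln (s i)))" by (simp add: exp_minus field_simps)
  hence "ln G \<le> ln (exp (\<alpha> * (\<Sum>i<n. ln (s i))))" using Gpos by (subst ln_le_cancel_iff) auto
  hence "ln G \<le> \<alpha> * (\<Sum>i<n. ln (s i))" by simp
  hence "1 / \<alpha> * ln G \<le> (\<Sum>i<n. ln (s i))" using al by (simp add: field_simps)
  hence "G powr (1 / \<alpha>) \<le> exp (\<Sum>i<n. ln (s i))" unfolding powr_def using Gpos by simp
  also have "\<dots> = (\<Prod>i<n. s i)" by (simp add: exp_sum spos)
  finally have Gs: "G powr (1 / \<alpha>) \<le> (\<Prod>i<n. s i)" .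
  have sprod: "0 < (\<Prod>i<n. s i)" using spos by (intro prod_pos) auto
  have "Ffun n \<mu> \<alpha> x = G powr (1 / \<alpha>) / (\<Prod>i<n. s i)"
    unfolding Ffun_def G_def s_def p_def q_def ..
  thus ?thesis using Gs sprod by simp
qed

end
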